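(* Let $\mathscr T\colon\mathbb{IDA}\to\mathbb{IM}$ send each involutive generalized dynamic algebra $\mathfrak K$ to the involutive submonoid $\mathscr T(K)$ of $(K,\odot,{}^*,e)$ generated by $\widetilde K$ (the smallest subset containing $\widetilde K$ and $e$ and closed under $\odot$ and ${}^*$), and each morphism $f$ to its restriction. Then: (1) for every IDA $\mathfrak K$, $\widetilde K\subseteq\mathscr T(K)\subseteq K$ and $\mathscr T(\mathfrak K)$ is an involutive submonoid of $(K,\odot,{}^*,e)$; (2) if $\mathfrak K$ is a semi-Foulis dynamic algebra such that for all $s,t\in\mathscr T(K)$, $s=t$ iff $s\equiv t$, then $\nu_{\mathfrak K}\colon\mathscr T(\mathfrak K)\to\mathscr T(\mathbf{Lin}(\widetilde{\mathfrak K}))$, $\nu_{\mathfrak K}(k)=k\bullet(-)$, is a well-defined isomorphism of involutive monoids, and its restriction to $\widetilde K$ is an order-preserving bijection from $(\widetilde K,\preceq)$ onto the test set $\{\pi_u\mid u\in\widetilde K\}$ of $\mathbf{Lin}(\widetilde{\mathfrak K})$ ordered by $p\le q\iff p=q\circ p$; (3) for every complete orthomodular lattice $\mathcal M$, $\mu_{\mathcal M}\colon\mathscr T(\mathbf{Lin}(\mathcal M))\to\mathscr T(\mathscr P(\mathscr T(\mathbf{Lin}(\mathcal M))))$, $\mu_{\mathcal M}(f)=\{f\}$, is an isomorphism in $\mathbb{IM}$; (4) for every morphism $f\colon\mathfrak K_1\to\mathfrak K_2$ in $\mathbb{IDA}$, $f(\mathscr T(K_1))\subseteq\mathscr T(K_2)$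 and $\mathscr T(f)=f|_{\mathscr T(K_1)}$.
   Context: An involutive unital quantale is $(Q,\bigsqcup,\odot,{}^*,e)$: complete join-semilattice $Q$, associative $\odot$ distributing over arbitrary joins in each argument, unit $e$, ${}^*$ with $x^{**}=x$, $(x\odot y)^*=y^*\odot x^*$, $(\bigsqcup x_i)^*=\bigsqcup x_i^*$. An involutive generalized dynamic algebra (IDA) is such a quantale with ${\sim}\colon K\to K$ satisfying, for all $x,y$ and families $(x_i)$: ${\sim}(x\odot{\sim}{\sim}y)={\sim}(x\odot y)$; ${\sim}(\bigsqcup{\sim}{\sim}x_i)={\sim}(\bigsqcup x_i)$; $({\sim}x)^*={\sim}x$; ${\sim}{\sim}({\sim}{\sim}x\odot y)={\sim}({\sim}x\sqcup{\sim}({\sim}x\sqcup y))$. Test set $\widetilde K=\{{\sim}k\mid k\in K\}$; $\bigvee W={\sim}{\sim}\bigsqcup W$ for $W\subseteq\widetilde K$; $w^\perp={\sim}w$; $k\preceq l$ iff $\bigvee\{k,l\}=l$; $k\bullet v={\sim}{\sim}(k\odot v)$ for $k\in K,v\in\widetilde K$; $k\equiv l$ iff $k\bullet w=l\bullet w$ for all $w\in\widetilde K$. IDA morphisms preserve arbitrary joins, $\odot$, ${}^*$, unit, ${\sim}$ (category $\mathbb{IDA}$); $\mathfrak K$ is semi-Foulis if $(\widetilde K,\preceq,{}^\perp)$ is a complete orthomodular lattice. $\mathbb{IM}$ is the category of involutive monoids $(M,\cdot,e,{}^* )$ with homomorphisms preserving product, unit, involution. For a complete orthomodular lattice $\mathcal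 M$: Sasaki projection $\pi_m(x)=m\wedge(m^\perp\vee x)$; a map $f$ is linear if there is $f^*$ with $f(x)\le y^\perp\iff x\le f^*(y)^\perp$ for all $x,y$; $\mathbf{Lin}(\mathcal M)$ (linear maps with pointwise joins, composition, ${}^*$, unit $\mathrm{id}$) is an IDA with ${\sim}f=\pi_{f(1)^\perp}$; its test set is $\{\pi_m\mid m\in M\}$ and $\pi_m^*=\pi_m$. For an involutive submonoid $L$ of $\mathbf{Lin}(\mathcal M)$ containing all $\pi_m$, $\mathscr P(L)$ is the IDA of all subsets of $L$ with union, $A\odot B=\{a\circ b\}$, $A^*=\{a^*\}$, unit $\{\mathrm{id}_M\}$, ${\sim}A=\{\pi_{(\bigvee_{a\in A}a(1))^\perp}\}$. *)

theory Defs
  imports "HOL-Library.FuncSet"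
begin

record 'a ida =
  ida_carrier :: "'a set"
  ida_join    :: "'a set \<Rightarrow> 'a"
  ida_mult    :: "'a \<Rightarrow> 'a \<Rightarrow> 'a"
  ida_star    :: "'a \<Rightarrow> 'a"
  ida_unit    :: "'a"
  ida_neg     :: "'a \<Rightarrow> 'a"

definition ida_le :: "'a ida \<Rightarrow> 'a \<Rightarrow> 'a \<Rightarrow> bool" where
  "ida_le K x y \<longleftrightarrow> ida_join K {x, y} = y"

definition is_ida :: "'a ida \<Rightarrow> bool" where
  "is_ida K \<longleftrightarrow>
    (let C = ida_carrier K; J = ida_join K; m = ida_mult K; s = ida_star K;
         e = ida_unit K; n = ida_neg K in
     \<comment> \<open>closure of the operations\<close>
     (\<forall>A. A \<subseteq> C \<longrightarrow> J A \<in> C) \<and>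
     (\<forall>x\<in>C. \<forall>y\<in>C. m x y \<in> C) \<and>
     (\<forall>x\<in>C. s x \<in> C) \<and> e \<in> C \<and> (\<forall>x\<in>C. n x \<in> C) \<and>
     \<comment> \<open>complete join-semilattice\<close>
     (\<forall>x\<in>C. ida_le K x x) \<and>
     (\<forall>x\<in>C. \<forall>y\<in>C. ida_le K x y \<and> ida_le K y x \<longrightarrow> x = y) \<and>
     (\<forall>x\<in>C. \<forall>y\<in>C. \<forall>z\<in>C. ida_le K x y \<and> ida_le K y z \<longrightarrow> ida_le K x z) \<and>
     (\<forall>A. A \<subseteq> C \<longrightarrow> (\<forall>a\<in>A. ida_le K a (J A)) \<and>
                         (\<forall>u\<in>C. (\<forall>a\<in>A. ida_le K a u) \<longrightarrow> ida_le K (J A) u)) \<and>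
     \<comment> \<open>unital quantale\<close>
     (\<forall>x\<in>C. \<forall>y\<in>C. \<forall>z\<in>C. m (m x y) z = m x (m y z)) \<and>
     (\<forall>x\<in>C. \<forall>A. A \<subseteq> C \<longrightarrow> m x (J A) = J ((\<lambda>a. m x a) ` A)) \<and>
     (\<forall>x\<in>C. \<forall>A. A \<subseteq> C \<longrightarrow> m (J A) x = J ((\<lambda>a. m a x) ` A)) \<and>
     (\<forall>x\<in>C. m e x = x \<and> m x e = x) \<and>
     \<comment> \<open>involution\<close>
     (\<forall>x\<in>C. s (s x) = x) \<and>
     (\<forall>x\<in>C. \<forall>y\<in>C. s (m x y) = m (s y) (s x)) \<and>
     (\<forall>A. A \<subseteq> C \<longrightarrow> s (J A) = J (s ` A)) \<and>
     \<comment> \<open>axioms for the negation\<close>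
     (\<forall>x\<in>C. \<forall>y\<in>C. n (m x (n (n y))) = n (m x y)) \<and>
     (\<forall>A. A \<subseteq> C \<longrightarrow> n (J ((\<lambda>a. n (n a)) ` A)) = n (J A)) \<and>
     (\<forall>x\<in>C. s (n x) = n x) \<and>
     (\<forall>x\<in>C. \<forall>y\<in>C. n (n (m (n (n x)) y)) = n (J {n x, n (J {n x, y})})))"

definition tests :: "'a ida \<Rightarrow> 'a set" where
  "tests K = ida_neg K ` ida_carrier K"

definition tvee :: "'a ida \<Rightarrow> 'a set \<Rightarrow> 'a" where
  "tvee K W = ida_neg K (ida_neg K (ida_join K W))"

definition tle :: "'a ida \<Rightarrow> 'a \<Rightarrow> 'a \<Rightarrow> bool" where
  "tle K k l \<longleftrightarrow> tvee K {k, l} = l"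

definition bullet :: "'a ida \<Rightarrow> 'a \<Rightarrow> 'a \<Rightarrow> 'a" where
  "bullet K k v = ida_neg K (ida_neg K (ida_mult K k v))"

definition ida_equiv :: "'a ida \<Rightarrow> 'a \<Rightarrow> 'a \<Rightarrow> bool" where
  "ida_equiv K k l \<longleftrightarrow> (\<forall>w\<in>tests K. bullet K k w = bullet K l w)"

definition ida_mor :: "'a ida \<Rightarrow> 'b ida \<Rightarrow> ('a \<Rightarrow> 'b) \<Rightarrow> bool" where
  "ida_mor K1 K2 f \<longleftrightarrow>
     f \<in> ida_carrier K1 \<rightarrow> ida_carrier K2 \<and>
     (\<forall>A. A \<subseteq> ida_carrier K1 \<longrightarrow> f (ida_join K1 A) = ida_join K2 (f ` A)) \<and>
     (\<forall>x\<in>ida_carrier K1. \<forall>y\<in>ida_carrier K1.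
        f (ida_mult K1 x y) = ida_mult K2 (f x) (f y)) \<and>
     (\<forall>x\<in>ida_carrier K1. f (ida_star K1 x) = ida_star K2 (f x)) \<and>
     f (ida_unit K1) = ida_unit K2 \<and>
     (\<forall>x\<in>ida_carrier K1. f (ida_neg K1 x) = ida_neg K2 (f x))"

record 'a invmon =
  im_carrier :: "'a set"
  im_mult    :: "'a \<Rightarrow> 'a \<Rightarrow> 'a"
  im_star    :: "'a \<Rightarrow> 'a"
  im_unit    :: "'a"

definition im_hom :: "'a invmon \<Rightarrow> 'b invmon \<Rightarrow> ('a \<Rightarrow> 'b) \<Rightarrow> bool" where
  "im_hom A B h \<longleftrightarrow>
     h \<in> im_carrier A \<rightarrow> im_carrier B \<and>
     (\<forall>x\<in>im_carrier A. \<forall>y\<in>im_carrier A. h (im_mult A x y) = im_mult B (h x) (h y)) \<and>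
     (\<forall>x\<in>im_carrier A. h (im_star A x) = im_star B (h x)) \<and>
     h (im_unit A) = im_unit B"

definition im_iso :: "'a invmon \<Rightarrow> 'b invmon \<Rightarrow> ('a \<Rightarrow> 'b) \<Rightarrow> bool" where
  "im_iso A B h \<longleftrightarrow> im_hom A B h \<and> bij_betw h (im_carrier A) (im_carrier B)"

definition is_inv_submonoid :: "'a ida \<Rightarrow> 'a set \<Rightarrow> bool" where
  "is_inv_submonoid K S \<longleftrightarrow>
     S \<subseteq> ida_carrier K \<and> ida_unit K \<in> S \<and>
     (\<forall>x\<in>S. \<forall>y\<in>S. ida_mult K x y \<in> S) \<and> (\<forall>x\<in>S. ida_star K x \<in> S)"

inductive_set Tset :: "'a ida \<Rightarrow> 'a set" for K where
  test: "k \<in> ida_carrier K \<Longrightarrow> ida_neg K k \<in> Tset K"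
| unit: "ida_unit K \<in> Tset K"
| mult: "s \<in> Tset K \<Longrightarrow> t \<in> Tset K \<Longrightarrow> ida_mult K s t \<in> Tset K"
| star: "s \<in> Tset K \<Longrightarrow> ida_star K s \<in> Tset K"

definition T_obj :: "'a ida \<Rightarrow> 'a invmon" where
  "T_obj K = \<lparr>im_carrier = Tset K, im_mult = ida_mult K, im_star = ida_star K,
              im_unit = ida_unit K\<rparr>"

definition T_mor :: "'a ida \<Rightarrow> ('a \<Rightarrow> 'b) \<Rightarrow> ('a \<Rightarrow> 'b)" where
  "T_mor K1 f = restrict f (Tset K1)"

record 'a oml =
  om_carrier :: "'a set"
  om_le      :: "'a \<Rightarrow> 'a \<Rightarrow> bool"
  om_perp    :: "'a \<Rightarrow> 'a"

definition om_is_lub :: "'a oml \<Rightarrow> 'a set \<Rightarrow> 'a \<Rightarrow> bool" where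
  "om_is_lub M A s \<longleftrightarrow> s \<in> om_carrier M \<and> (\<forall>a\<in>A. om_le M a s) \<and>
     (\<forall>t\<in>om_carrier M. (\<forall>a\<in>A. om_le M a t) \<longrightarrow> om_le M s t)"

definition om_is_glb :: "'a oml \<Rightarrow> 'a set \<Rightarrow> 'a \<Rightarrow> bool" where
  "om_is_glb M A s \<longleftrightarrow> s \<in> om_carrier M \<and> (\<forall>a\<in>A. om_le M s a) \<and>
     (\<forall>t\<in>om_carrier M. (\<forall>a\<in>A. om_le M t a) \<longrightarrow> om_le M t s)"

definition om_Sup :: "'a oml \<Rightarrow> 'a set \<Rightarrow> 'a" where
  "om_Sup M A = (THE s. om_is_lub M A s)"

definition om_Inf :: "'a oml \<Rightarrow> 'a set \<Rightarrow> 'a" where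
  "om_Inf M A = (THE s. om_is_glb M A s)"

definition om_sup :: "'a oml \<Rightarrow> 'a \<Rightarrow> 'a \<Rightarrow> 'a" where
  "om_sup M x y = om_Sup M {x, y}"

definition om_inf :: "'a oml \<Rightarrow> 'a \<Rightarrow> 'a \<Rightarrow> 'a" where
  "om_inf M x y = om_Inf M {x, y}"

definition om_top :: "'a oml \<Rightarrow> 'a" where
  "om_top M = om_Sup M (om_carrier M)"

definition om_bot :: "'a oml \<Rightarrow> 'a" where
  "om_bot M = om_Sup M {}"

definition complete_oml :: "'a oml \<Rightarrow> bool" where
  "complete_oml M \<longleftrightarrow>
    (let C = om_carrier M; le = om_le M; p = om_perp M in
     (\<forall>x\<in>C. le x x) \<and>
     (\<forall>x\<in>C. \<forall>y\<in>C. le x y \<and> le y x \<longrightarrow> x = y) \<and>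
     (\<forall>x\<in>C. \<forall>y\<in>C. \<forall>z\<in>C. le x y \<and> le y z \<longrightarrow> le x z) \<and>
     (\<forall>A. A \<subseteq> C \<longrightarrow> (\<exists>s. om_is_lub M A s)) \<and>
     (\<forall>x\<in>C. p x \<in> C) \<and>
     (\<forall>x\<in>C. p (p x) = x) \<and>
     (\<forall>x\<in>C. \<forall>y\<in>C. le x y \<longrightarrow> le (p y) (p x)) \<and>
     (\<forall>x\<in>C. om_inf M x (p x) = om_bot M \<and> om_sup M x (p x) = om_top M) \<and>
     (\<forall>x\<in>C. \<forall>y\<in>C. le x y \<longrightarrow> y = om_sup M x (om_inf M (p x) y)))"

definition sasaki :: "'a oml \<Rightarrow> 'a \<Rightarrow> ('a \<Rightarrow> 'a)" where
  "sasaki M m = (\<lambda>x\<in>om_carrier M. om_inf M m (om_sup M (om_perp M m) x))"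

definition is_adjoint :: "'a oml \<Rightarrow> ('a \<Rightarrow> 'a) \<Rightarrow> ('a \<Rightarrow> 'a) \<Rightarrow> bool" where
  "is_adjoint M f g \<longleftrightarrow> g \<in> om_carrier M \<rightarrow>\<^sub>E om_carrier M \<and>
     (\<forall>x\<in>om_carrier M. \<forall>y\<in>om_carrier M.
        om_le M (f x) (om_perp M y) \<longleftrightarrow> om_le M x (om_perp M (g y)))"

definition is_linear :: "'a oml \<Rightarrow> ('a \<Rightarrow> 'a) \<Rightarrow> bool" where
  "is_linear M f \<longleftrightarrow> f \<in> om_carrier M \<rightarrow>\<^sub>E om_carrier M \<and> (\<exists>g. is_adjoint M f g)"

definition adjoint :: "'a oml \<Rightarrow> ('a \<Rightarrow> 'a) \<Rightarrow> ('a \<Rightarrow> 'a)" where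
  "adjoint M f = (THE g. is_adjoint M f g)"

definition om_comp :: "'a oml \<Rightarrow> ('a \<Rightarrow> 'a) \<Rightarrow> ('a \<Rightarrow> 'a) \<Rightarrow> ('a \<Rightarrow> 'a)" where
  "om_comp M f g = (\<lambda>x\<in>om_carrier M. f (g x))"

definition Lin :: "'a oml \<Rightarrow> ('a \<Rightarrow> 'a) ida" where
  "Lin M = \<lparr>ida_carrier = {f. is_linear M f},
            ida_join = (\<lambda>F. \<lambda>x\<in>om_carrier M. om_Sup M ((\<lambda>f. f x) ` F)),
            ida_mult = om_comp M,
            ida_star = adjoint M,
            ida_unit = (\<lambda>x\<in>om_carrier M. x),
            ida_neg = (\<lambda>f. sasaki M (om_perp M (f (om_top M))))\<rparr>"

definition Pset :: "'a oml \<Rightarrow> ('a \<Rightarrow> 'a) set \<Rightarrow> ('a \<Rightarrow> 'a) set ida" where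
  "Pset M L = \<lparr>ida_carrier = Pow L,
               ida_join = Union,
               ida_mult = (\<lambda>A B. {om_comp M a b | a b. a \<in> A \<and> b \<in> B}),
               ida_star = (\<lambda>A. adjoint M ` A),
               ida_unit = {(\<lambda>x\<in>om_carrier M. x)},
               ida_neg = (\<lambda>A. {sasaki M (om_perp M (om_Sup M ((\<lambda>a. a (om_top M)) ` A)))})\<rparr>"

definition tests_oml :: "'a ida \<Rightarrow> 'a oml" where
  "tests_oml K = \<lparr>om_carrier = tests K, om_le = tle K, om_perp = ida_neg K\<rparr>"

definition semi_foulis :: "'a ida \<Rightarrow> bool" where
  "semi_foulis K \<longleftrightarrow> is_ida K \<and> complete_oml (tests_oml K)"

definition nu :: "'a ida \<Rightarrow> 'a \<Rightarrow> ('a \<Rightarrow> 'a)" where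
  "nu K k = (\<lambda>w\<in>tests K. bullet K k w)"

end

theory Submission
  imports Defs
begin


locale coml =
  fixes M :: "'a oml"
  assumes coml: "complete_oml M"
begin

lemma F: "(\<forall>x\<in>om_carrier M. om_le M x x) \<and>
     (\<forall>x\<in>om_carrier M. \<forall>y\<in>om_carrier M. om_le M x y \<and> om_le M y x \<longrightarrow> x = y) \<and>
     (\<forall>x\<in>om_carrier M. \<forall>y\<in>om_carrier M. \<forall>z\<in>om_carrier M. om_le M x y \<and> om_le M y z \<longrightarrow> om_le M x z) \<and>
     (\<forall>A. A \<subseteq> om_carrier M \<longrightarrow> (\<exists>s. om_is_lub M A s)) \<and>
     (\<forall>x\<in>om_carrier M. om_perp M x \<in> om_carrier M) \<and>
     (\<forall>x\<in>om_carrier M. om_perp M (om_perp M x) = x) \<and>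
     (\<forall>x\<in>om_carrier M. \<forall>y\<in>om_carrier M. om_le M x y \<longrightarrow> om_le M (om_perp M y) (om_perp M x)) \<and>
     (\<forall>x\<in>om_carrier M. om_inf M x (om_perp M x) = om_bot M \<and> om_sup M x (om_perp M x) = om_top M) \<and>
     (\<forall>x\<in>om_carrier M. \<forall>y\<in>om_carrier M. om_le M x y \<longrightarrow> y = om_sup M x (om_inf M (om_perp M x) y))"
  using coml unfolding complete_oml_def Let_def .

lemma le_refl: "x \<in> om_carrier M \<Longrightarrow> om_le M x x"
  using F[THEN conjunct1] by blast
lemma le_antisym: "x \<in> om_carrier M \<Longrightarrow> y \<in> om_carrier M \<Longrightarrow> om_le M x y \<Longrightarrow> om_le M y x \<Longrightarrow> x = y"
  using F[THEN conjunct2, THEN conjunct1] by blast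
lemma le_trans: "x \<in> om_carrier M \<Longrightarrow> y \<in> om_carrier M \<Longrightarrow> z \<in> om_carrier M \<Longrightarrow> om_le M x y \<Longrightarrow> om_le M y z \<Longrightarrow> om_le M x z"
  using F[THEN conjunct2, THEN conjunct2, THEN conjunct1] by blast
lemma lub_ex: "A \<subseteq> om_carrier M \<Longrightarrow> \<exists>s. om_is_lub M A s"
  using F[THEN conjunct2, THEN conjunct2, THEN conjunct2, THEN conjunct1] by blast
lemma perp_in: "x \<in> om_carrier M \<Longrightarrow> om_perp M x \<in> om_carrier M"
  using F[THEN conjunct2, THEN conjunct2, THEN conjunct2, THEN conjunct2, THEN conjunct1] by blast
lemma perp_perp: "x \<in> om_carrier M \<Longrightarrow> om_perp M (om_perp M x) = x"
  using F[THEN conjunct2, THEN conjunct2, THEN conjunct2, THEN conjunct2, THEN conjunct2, THEN conjunct1] by blast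
lemma perp_anti: "x \<in> om_carrier M \<Longrightarrow> y \<in> om_carrier M \<Longrightarrow> om_le M x y \<Longrightarrow> om_le M (om_perp M y) (om_perp M x)"
  using F[THEN conjunct2, THEN conjunct2, THEN conjunct2, THEN conjunct2, THEN conjunct2, THEN conjunct2, THEN conjunct1] by blast
lemma om_law: "x \<in> om_carrier M \<Longrightarrow> y \<in> om_carrier M \<Longrightarrow> om_le M x y \<Longrightarrow> y = om_sup M x (om_inf M (om_perp M x) y)"
  using F[THEN conjunct2, THEN conjunct2, THEN conjunct2, THEN conjunct2, THEN conjunct2, THEN conjunct2, THEN conjunct2, THEN conjunct2] by blast

lemma perp_anti_iff: "x \<in> om_carrier M \<Longrightarrow> y \<in> om_carrier M \<Longrightarrow> om_le M (om_perp M y) (om_perp M x) \<longleftrightarrow> om_le M x y"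
  by (metis perp_anti perp_in perp_perp)

lemma perp_swap: "x \<in> om_carrier M \<Longrightarrow> y \<in> om_carrier M \<Longrightarrow> om_le M x (om_perp M y) \<longleftrightarrow> om_le M y (om_perp M x)"
  by (metis perp_anti_iff perp_in perp_perp)

lemma lub_unique: "om_is_lub M A s \<Longrightarrow> om_is_lub M A t \<Longrightarrow> s = t"
  unfolding om_is_lub_def by (meson le_antisym)

lemma glb_unique: "om_is_glb M A s \<Longrightarrow> om_is_glb M A t \<Longrightarrow> s = t"
  unfolding om_is_glb_def by (meson le_antisym)

lemma Sup_eq: "om_is_lub M A s \<Longrightarrow> om_Sup M A = s"
  unfolding om_Sup_def by (metis lub_unique the_equality)

lemma Inf_eq: "om_is_glb M A s \<Longrightarrow> om_Inf M A = s"
  unfolding om_Inf_def by (metis glb_unique the_equality)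

lemma Sup_lub: "A \<subseteq> om_carrier M \<Longrightarrow> om_is_lub M A (om_Sup M A)"
  using lub_ex Sup_eq by metis

lemma Sup_in: "A \<subseteq> om_carrier M \<Longrightarrow> om_Sup M A \<in> om_carrier M"
  using Sup_lub[of A] unfolding om_is_lub_def by blast
lemma Sup_upper: "A \<subseteq> om_carrier M \<Longrightarrow> a \<in> A \<Longrightarrow> om_le M a (om_Sup M A)"
  using Sup_lub[of A] unfolding om_is_lub_def by blast
lemma Sup_least: "A \<subseteq> om_carrier M \<Longrightarrow> t \<in> om_carrier M \<Longrightarrow> (\<And>a. a \<in> A \<Longrightarrow> om_le M a t) \<Longrightarrow> om_le M (om_Sup M A) t"
  using Sup_lub[of A] unfolding om_is_lub_def by blast

abbreviation "C \<equiv> om_carrier M"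
abbreviation "le \<equiv> om_le M"
abbreviation "p \<equiv> om_perp M"
abbreviation "jn \<equiv> om_sup M"
abbreviation "mt \<equiv> om_inf M"
abbreviation "tp \<equiv> om_top M"

lemma sup_in: "x \<in> C \<Longrightarrow> y \<in> C \<Longrightarrow> jn x y \<in> C"
  unfolding om_sup_def by (intro Sup_in) auto
lemma sup_ge1: "x \<in> C \<Longrightarrow> y \<in> C \<Longrightarrow> le x (jn x y)"
  unfolding om_sup_def by (intro Sup_upper) auto
lemma sup_ge2: "x \<in> C \<Longrightarrow> y \<in> C \<Longrightarrow> le y (jn x y)"
  unfolding om_sup_def by (intro Sup_upper) auto
lemma sup_least: "x \<in> C \<Longrightarrow> y \<in> C \<Longrightarrow> z \<in> C \<Longrightarrow> le x z \<Longrightarrow> le y z \<Longrightarrow> le (jn x y) z"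
  unfolding om_sup_def by (intro Sup_least) auto

lemma Sup_single: "x \<in> C \<Longrightarrow> om_Sup M {x} = x"
  by (intro Sup_eq) (auto simp: om_is_lub_def le_refl)

lemma inf_eq: "x \<in> C \<Longrightarrow> y \<in> C \<Longrightarrow> mt x y = p (jn (p x) (p y))"
  unfolding om_inf_def
proof (intro Inf_eq)
  assume x: "x \<in> C" and y: "y \<in> C"
  have s: "jn (p x) (p y) \<in> C" using x y by (simp add: perp_in sup_in)
  show "om_is_glb M {x, y} (p (jn (p x) (p y)))"
    unfolding om_is_glb_def
  proof (intro conjI ballI impI)
    show "p (jn (p x) (p y)) \<in> C" using s perp_in by blast
  next
    fix a assume "a \<in> {x, y}"
    then show "le (p (jn (p x) (p y))) a"
      using x y s by (metis empty_iff insert_iff perp_anti perp_in perp_perp sup_ge1 sup_ge2)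
  next
    fix t assume t: "t \<in> C" and h: "\<forall>a\<in>{x, y}. le t a"
    have "le (jn (p x) (p y)) (p t)"
      using h x y t by (intro sup_least) (auto simp: perp_in perp_anti)
    then show "le t (p (jn (p x) (p y)))"
      using s t by (metis perp_anti perp_in perp_perp)
  qed
qed

lemma inf_in: "x \<in> C \<Longrightarrow> y \<in> C \<Longrightarrow> mt x y \<in> C"
  by (simp add: inf_eq perp_in sup_in)
lemma inf_le1: "x \<in> C \<Longrightarrow> y \<in> C \<Longrightarrow> le (mt x y) x"
  by (metis inf_eq perp_anti perp_in perp_perp sup_ge1 sup_in)
lemma inf_le2: "x \<in> C \<Longrightarrow> y \<in> C \<Longrightarrow> le (mt x y) y"
  by (metis inf_eq perp_anti perp_in perp_perp sup_ge2 sup_in)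
lemma inf_greatest: "x \<in> C \<Longrightarrow> y \<in> C \<Longrightarrow> z \<in> C \<Longrightarrow> le z x \<Longrightarrow> le z y \<Longrightarrow> le z (mt x y)"
  by (smt (verit) inf_eq perp_anti perp_in perp_perp sup_in sup_least)

lemma perp_sup: "x \<in> C \<Longrightarrow> y \<in> C \<Longrightarrow> p (jn x y) = mt (p x) (p y)"
  by (simp add: inf_eq perp_in perp_perp)
lemma perp_inf: "x \<in> C \<Longrightarrow> y \<in> C \<Longrightarrow> p (mt x y) = jn (p x) (p y)"
  by (simp add: inf_eq perp_in perp_perp sup_in)

lemma top_in: "tp \<in> C"
  unfolding om_top_def by (rule Sup_in) simp
lemma le_top: "x \<in> C \<Longrightarrow> le x tp"
  unfolding om_top_def by (rule Sup_upper) auto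
lemma sup_top: "x \<in> C \<Longrightarrow> jn x tp = tp"
  by (meson le_antisym le_refl le_top sup_ge2 sup_in sup_least top_in)
lemma inf_top: "x \<in> C \<Longrightarrow> mt x tp = x"
  by (meson inf_greatest inf_in inf_le1 le_antisym le_refl le_top top_in)

lemma sup_mono: "a \<in> C \<Longrightarrow> x \<in> C \<Longrightarrow> y \<in> C \<Longrightarrow> le x y \<Longrightarrow> le (jn a x) (jn a y)"
  by (meson le_trans sup_ge1 sup_ge2 sup_in sup_least)
lemma inf_mono: "a \<in> C \<Longrightarrow> x \<in> C \<Longrightarrow> y \<in> C \<Longrightarrow> le x y \<Longrightarrow> le (mt a x) (mt a y)"
  by (meson le_trans inf_le1 inf_le2 inf_in inf_greatest)
lemma sup_absorb: "a \<in> C \<Longrightarrow> b \<in> C \<Longrightarrow> jn a (jn a b) = jn a b"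
  by (meson le_antisym le_refl sup_ge1 sup_ge2 sup_in sup_least)

lemma om_dual: "z \<in> C \<Longrightarrow> y \<in> C \<Longrightarrow> le z y \<Longrightarrow> mt y (jn (p y) z) = z"
proof -
  assume z: "z \<in> C" and y: "y \<in> C" and zy: "le z y"
  have "p z = jn (p y) (mt (p (p y)) (p z))"
    using om_law[of "p y" "p z"] z y zy by (simp add: perp_anti perp_in)
  then have "p z = jn (p y) (mt y (p z))" using y by (simp add: perp_perp)
  then have "p (p z) = p (jn (p y) (mt y (p z)))" by simp
  also have "\<dots> = mt y (jn (p y) z)"
    using y z by (simp add: perp_sup perp_inf perp_in inf_in perp_perp)
  finally show ?thesis using z by (simp add: perp_perp)
qed

lemma sasaki_val: "x \<in> C \<Longrightarrow> sasaki M m x = mt m (jn (p m) x)"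
  unfolding sasaki_def by simp

lemma sasaki_in: "m \<in> C \<Longrightarrow> x \<in> C \<Longrightarrow> sasaki M m x \<in> C"
  by (simp add: sasaki_val inf_in sup_in perp_in)

lemma sasaki_top: "m \<in> C \<Longrightarrow> sasaki M m tp = m"
  by (simp add: sasaki_val top_in sup_top inf_top perp_in)

lemma sasaki_le: "m \<in> C \<Longrightarrow> x \<in> C \<Longrightarrow> le (sasaki M m x) m"
  by (simp add: sasaki_val inf_le1 sup_in perp_in)

lemma sasaki_mono: "m \<in> C \<Longrightarrow> x \<in> C \<Longrightarrow> y \<in> C \<Longrightarrow> le x y \<Longrightarrow> le (sasaki M m x) (sasaki M m y)"
  by (simp add: sasaki_val inf_mono sup_mono sup_in perp_in)

lemma sasaki_galois: "m \<in> C \<Longrightarrow> x \<in> C \<Longrightarrow> z \<in> C \<Longrightarrow>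
   le (sasaki M m x) z \<longleftrightarrow> le x (jn (p m) (mt m z))"
proof
  assume m: "m \<in> C" and x: "x \<in> C" and z: "z \<in> C"
  have pm: "p m \<in> C" using m perp_in by blast
  have imz: "mt m z \<in> C" using m z inf_in by blast
  {
    assume h: "le (sasaki M m x) z"
    have a: "le (sasaki M m x) (mt m z)"
      using h m x z by (simp add: inf_greatest sasaki_in sasaki_le)
    have "jn (p m) x = jn (p m) (mt (p (p m)) (jn (p m) x))"
      using om_law[of "p m" "jn (p m) x"] pm x by (simp add: sup_ge1 sup_in)
    then have b: "jn (p m) x = jn (p m) (sasaki M m x)"
      using m x by (simp add: perp_perp sasaki_val)
    have "le x (jn (p m) x)" using pm x sup_ge2 by blast
    also have "le (jn (p m) (sasaki M m x)) (jn (p m) (mt m z))"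
      using a pm imz m x by (simp add: sup_mono sasaki_in)
    ultimately show "le x (jn (p m) (mt m z))"
      using b pm x imz m by (metis le_trans sup_in sasaki_in)
  }
  {
    assume h: "le x (jn (p m) (mt m z))"
    have hh: "jn (p m) (mt m z) \<in> C" using pm imz sup_in by blast
    have "le (sasaki M m x) (sasaki M m (jn (p m) (mt m z)))"
      using h m x hh sasaki_mono by blast
    moreover have "sasaki M m (jn (p m) (mt m z)) = mt m z"
      using m pm imz hh by (simp add: sasaki_val sup_absorb om_dual inf_le1 z)
    ultimately show "le (sasaki M m x) z"
      using m z imz inf_le2 le_trans sasaki_in x by metis
  }
qed

lemma sasaki_selfadj: "m \<in> C \<Longrightarrow> x \<in> C \<Longrightarrow> y \<in> C \<Longrightarrow>
   le (sasaki M m x) (p y) \<longleftrightarrow> le x (p (sasaki M m y))"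
proof -
  assume m: "m \<in> C" and x: "x \<in> C" and y: "y \<in> C"
  have 1: "le (sasaki M m x) (p y) \<longleftrightarrow> le x (jn (p m) (mt m (p y)))"
    using sasaki_galois m x y perp_in by blast
  have "p (sasaki M m y) = p (mt m (jn (p m) y))" using y by (simp add: sasaki_val)
  also have "\<dots> = jn (p m) (p (jn (p m) y))" using m y by (simp add: perp_inf perp_in sup_in)
  also have "\<dots> = jn (p m) (mt m (p y))" using m y by (simp add: perp_sup perp_in perp_perp)
  finally show ?thesis using 1 by simp
qed

lemma sasaki_ext: "sasaki M m \<in> C \<rightarrow>\<^sub>E C" if "m \<in> C"
  using that by (auto simp: sasaki_def inf_in sup_in perp_in)

lemma sasaki_adj: "m \<in> C \<Longrightarrow> is_adjoint M (sasaki M m) (sasaki M m)"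
  unfolding is_adjoint_def by (simp add: sasaki_ext sasaki_selfadj)

lemma sasaki_linear: "m \<in> C \<Longrightarrow> is_linear M (sasaki M m)"
  unfolding is_linear_def using sasaki_adj sasaki_ext by blast

lemma adj_unique: "is_adjoint M f g \<Longrightarrow> is_adjoint M f h \<Longrightarrow> g = h"
proof
  fix y
  assume g: "is_adjoint M f g" and h: "is_adjoint M f h"
  show "g y = h y"
  proof (cases "y \<in> C")
    case False
    then show ?thesis using g h unfolding is_adjoint_def PiE_def extensional_def by auto
  next
    case True
    have gy: "g y \<in> C" and hy: "h y \<in> C" using g h True unfolding is_adjoint_def by auto
    have "\<forall>x\<in>C. le x (p (g y)) \<longleftrightarrow> le x (p (h y))"
      using g h True unfolding is_adjoint_def by blast
    then have "p (g y) = p (h y)"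
      using gy hy by (meson le_antisym le_refl perp_in)
    then show ?thesis using gy hy by (metis perp_perp)
  qed
qed

lemma adjoint_eq: "is_adjoint M f g \<Longrightarrow> adjoint M f = g"
  unfolding adjoint_def using adj_unique by (metis the_equality)

lemma adj_sym: "f \<in> C \<rightarrow>\<^sub>E C \<Longrightarrow> is_adjoint M f g \<Longrightarrow> is_adjoint M g f"
  unfolding is_adjoint_def
proof (intro conjI ballI)
  assume f: "f \<in> C \<rightarrow>\<^sub>E C" and h: "g \<in> C \<rightarrow>\<^sub>E C \<and> (\<forall>x\<in>C. \<forall>y\<in>C. le (f x) (p y) = le x (p (g y)))"
  show "f \<in> C \<rightarrow>\<^sub>E C" by (rule f)
  fix x y assume x: "x \<in> C" and y: "y \<in> C"
  have fy: "f y \<in> C" and gx: "g x \<in> C" using f h x y by auto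
  have "le (g x) (p y) \<longleftrightarrow> le y (p (g x))" using gx y perp_swap by blast
  also have "\<dots> \<longleftrightarrow> le (f y) (p x)" using h x y by blast
  also have "\<dots> \<longleftrightarrow> le x (p (f y))" using fy x perp_swap by blast
  finally show "le (g x) (p y) = le x (p (f y))" .
qed

lemma adj_comp: "f \<in> C \<rightarrow>\<^sub>E C \<Longrightarrow> g \<in> C \<rightarrow>\<^sub>E C \<Longrightarrow> is_adjoint M f f' \<Longrightarrow> is_adjoint M g g'
  \<Longrightarrow> is_adjoint M (om_comp M f g) (om_comp M g' f')"
  unfolding is_adjoint_def om_comp_def
  by (auto simp: PiE_def Pi_def extensional_def)

lemma id_adj: "is_adjoint M (\<lambda>x\<in>C. x) (\<lambda>x\<in>C. x)"
  unfolding is_adjoint_def by (auto simp: perp_swap)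

lemma linear_adjoint: "is_linear M f \<Longrightarrow> is_adjoint M f (adjoint M f)"
  unfolding is_linear_def using adjoint_eq by metis

lemma linear_adjoint_linear: "is_linear M f \<Longrightarrow> is_linear M (adjoint M f)"
  by (metis adj_sym is_adjoint_def is_linear_def linear_adjoint)

lemma comp_ext: "om_comp M f g \<in> C \<rightarrow>\<^sub>E C" if "f \<in> C \<rightarrow>\<^sub>E C" "g \<in> C \<rightarrow>\<^sub>E C"
  using that by (auto simp: om_comp_def)

lemma linear_comp: "is_linear M f \<Longrightarrow> is_linear M g \<Longrightarrow> is_linear M (om_comp M f g)"
  unfolding is_linear_def using adj_comp comp_ext by blast

lemma linear_id: "is_linear M (\<lambda>x\<in>C. x)"
  unfolding is_linear_def using id_adj by auto

end


locale idal =
  fixes K :: "'a ida"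
  assumes ida: "is_ida K"
begin

abbreviation "KC \<equiv> ida_carrier K"
abbreviation "J \<equiv> ida_join K"
abbreviation "mm \<equiv> ida_mult K"
abbreviation "st \<equiv> ida_star K"
abbreviation "eu \<equiv> ida_unit K"
abbreviation "n \<equiv> ida_neg K"
abbreviation "lq \<equiv> ida_le K"

lemma G: "(\<forall>A. A \<subseteq> KC \<longrightarrow> J A \<in> KC) \<and>
     (\<forall>x\<in>KC. \<forall>y\<in>KC. mm x y \<in> KC) \<and>
     (\<forall>x\<in>KC. st x \<in> KC) \<and> eu \<in> KC \<and> (\<forall>x\<in>KC. n x \<in> KC) \<and>
     (\<forall>x\<in>KC. lq x x) \<and>
     (\<forall>x\<in>KC. \<forall>y\<in>KC. lq x y \<and> lq y x \<longrightarrow> x = y) \<and>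
     (\<forall>x\<in>KC. \<forall>y\<in>KC. \<forall>z\<in>KC. lq x y \<and> lq y z \<longrightarrow> lq x z) \<and>
     (\<forall>A. A \<subseteq> KC \<longrightarrow> (\<forall>a\<in>A. lq a (J A)) \<and>
                         (\<forall>u\<in>KC. (\<forall>a\<in>A. lq a u) \<longrightarrow> lq (J A) u)) \<and>
     (\<forall>x\<in>KC. \<forall>y\<in>KC. \<forall>z\<in>KC. mm (mm x y) z = mm x (mm y z)) \<and>
     (\<forall>x\<in>KC. \<forall>A. A \<subseteq> KC \<longrightarrow> mm x (J A) = J ((\<lambda>a. mm x a) ` A)) \<and>
     (\<forall>x\<in>KC. \<forall>A. A \<subseteq> KC \<longrightarrow> mm (J A) x = J ((\<lambda>a. mm a x) ` A)) \<and>
     (\<forall>x\<in>KC. mm eu x = x \<and> mm x eu = x) \<and>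
     (\<forall>x\<in>KC. st (st x) = x) \<and>
     (\<forall>x\<in>KC. \<forall>y\<in>KC. st (mm x y) = mm (st y) (st x)) \<and>
     (\<forall>A. A \<subseteq> KC \<longrightarrow> st (J A) = J (st ` A)) \<and>
     (\<forall>x\<in>KC. \<forall>y\<in>KC. n (mm x (n (n y))) = n (mm x y)) \<and>
     (\<forall>A. A \<subseteq> KC \<longrightarrow> n (J ((\<lambda>a. n (n a)) ` A)) = n (J A)) \<and>
     (\<forall>x\<in>KC. st (n x) = n x) \<and>
     (\<forall>x\<in>KC. \<forall>y\<in>KC. n (n (mm (n (n x)) y)) = n (J {n x, n (J {n x, y})}))"
  using ida unfolding is_ida_def Let_def .

lemma J_in: "A \<subseteq> KC \<Longrightarrow> J A \<in> KC" using G[THEN conjunct1] by blast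
lemma mm_in: "x \<in> KC \<Longrightarrow> y \<in> KC \<Longrightarrow> mm x y \<in> KC" using G[THEN conjunct2, THEN conjunct1] by blast
lemma st_in: "x \<in> KC \<Longrightarrow> st x \<in> KC" using G[THEN conjunct2, THEN conjunct2, THEN conjunct1] by blast
lemma eu_in: "eu \<in> KC" using G[THEN conjunct2,THEN conjunct2,THEN conjunct2,THEN conjunct1] .
lemma n_in: "x \<in> KC \<Longrightarrow> n x \<in> KC" using G[THEN conjunct2, THEN conjunct2, THEN conjunct2, THEN conjunct2, THEN conjunct1] by blast
lemma lq_refl: "x \<in> KC \<Longrightarrow> lq x x" using G[THEN conjunct2, THEN conjunct2, THEN conjunct2, THEN conjunct2, THEN conjunct2, THEN conjunct1] by blast
lemma lq_antisym: "x \<in> KC \<Longrightarrow> y \<in> KC \<Longrightarrow> lq x y \<Longrightarrow> lq y x \<Longrightarrow> x = y" using G[THEN conjunct2, THEN conjunct2, THEN conjunct2, THEN conjunct2, THEN conjunct2, THEN conjunct2, THEN conjunct1] by blast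
lemma lq_trans: "x \<in> KC \<Longrightarrow> y \<in> KC \<Longrightarrow> z \<in> KC \<Longrightarrow> lq x y \<Longrightarrow> lq y z \<Longrightarrow> lq x z" using G[THEN conjunct2, THEN conjunct2, THEN conjunct2, THEN conjunct2, THEN conjunct2, THEN conjunct2, THEN conjunct2, THEN conjunct1] by blast
lemma J_upper: "A \<subseteq> KC \<Longrightarrow> a \<in> A \<Longrightarrow> lq a (J A)" using G[THEN conjunct2, THEN conjunct2, THEN conjunct2, THEN conjunct2, THEN conjunct2, THEN conjunct2, THEN conjunct2, THEN conjunct2, THEN conjunct1] by blast
lemma J_least: "A \<subseteq> KC \<Longrightarrow> u \<in> KC \<Longrightarrow> (\<forall>a\<in>A. lq a u) \<Longrightarrow> lq (J A) u" using G[THEN conjunct2, THEN conjunct2, THEN conjunct2, THEN conjunct2, THEN conjunct2, THEN conjunct2, THEN conjunct2, THEN conjunct2, THEN conjunct1] by blast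
lemma assoc: "x \<in> KC \<Longrightarrow> y \<in> KC \<Longrightarrow> z \<in> KC \<Longrightarrow> mm (mm x y) z = mm x (mm y z)" using G[THEN conjunct2, THEN conjunct2, THEN conjunct2, THEN conjunct2, THEN conjunct2, THEN conjunct2, THEN conjunct2, THEN conjunct2, THEN conjunct2, THEN conjunct1] by blast
lemma unit_l: "x \<in> KC \<Longrightarrow> mm eu x = x" using G[THEN conjunct2, THEN conjunct2, THEN conjunct2, THEN conjunct2, THEN conjunct2, THEN conjunct2, THEN conjunct2, THEN conjunct2, THEN conjunct2, THEN conjunct2, THEN conjunct2, THEN conjunct2, THEN conjunct1] by blast
lemma unit_r: "x \<in> KC \<Longrightarrow> mm x eu = x" using G[THEN conjunct2, THEN conjunct2, THEN conjunct2, THEN conjunct2, THEN conjunct2, THEN conjunct2, THEN conjunct2, THEN conjunct2, THEN conjunct2, THEN conjunct2, THEN conjunct2, THEN conjunct2, THEN conjunct1] by blast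
lemma stst: "x \<in> KC \<Longrightarrow> st (st x) = x" using G[THEN conjunct2, THEN conjunct2, THEN conjunct2, THEN conjunct2, THEN conjunct2, THEN conjunct2, THEN conjunct2, THEN conjunct2, THEN conjunct2, THEN conjunct2, THEN conjunct2, THEN conjunct2, THEN conjunct2, THEN conjunct1] by blast
lemma st_mm: "x \<in> KC \<Longrightarrow> y \<in> KC \<Longrightarrow> st (mm x y) = mm (st y) (st x)" using G[THEN conjunct2, THEN conjunct2, THEN conjunct2, THEN conjunct2, THEN conjunct2, THEN conjunct2, THEN conjunct2, THEN conjunct2, THEN conjunct2, THEN conjunct2, THEN conjunct2, THEN conjunct2, THEN conjunct2, THEN conjunct2, THEN conjunct1] by blast
lemma ax1: "x \<in> KC \<Longrightarrow> y \<in> KC \<Longrightarrow> n (mm x (n (n y))) = n (mm x y)" using G[THEN conjunct2, THEN conjunct2, THEN conjunct2, THEN conjunct2, THEN conjunct2, THEN conjunct2, THEN conjunct2, THEN conjunct2, THEN conjunct2, THEN conjunct2, THEN conjunct2, THEN conjunct2, THEN conjunct2, THEN conjunct2, THEN conjunct2, THEN conjunct2, THEN conjunct1] by blast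
lemma ax2: "A \<subseteq> KC \<Longrightarrow> n (J ((\<lambda>a. n (n a)) ` A)) = n (J A)" using G[THEN conjunct2, THEN conjunct2, THEN conjunct2, THEN conjunct2, THEN conjunct2, THEN conjunct2, THEN conjunct2, THEN conjunct2, THEN conjunct2, THEN conjunct2, THEN conjunct2, THEN conjunct2, THEN conjunct2, THEN conjunct2, THEN conjunct2, THEN conjunct2, THEN conjunct2, THEN conjunct1] by blast
lemma ax3: "x \<in> KC \<Longrightarrow> st (n x) = n x" using G[THEN conjunct2, THEN conjunct2, THEN conjunct2, THEN conjunct2, THEN conjunct2, THEN conjunct2, THEN conjunct2, THEN conjunct2, THEN conjunct2, THEN conjunct2, THEN conjunct2, THEN conjunct2, THEN conjunct2, THEN conjunct2, THEN conjunct2, THEN conjunct2, THEN conjunct2, THEN conjunct2, THEN conjunct1] by blast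
lemma ax4: "x \<in> KC \<Longrightarrow> y \<in> KC \<Longrightarrow> n (n (mm (n (n x)) y)) = n (J {n x, n (J {n x, y})})" using G[THEN conjunct2, THEN conjunct2, THEN conjunct2, THEN conjunct2, THEN conjunct2, THEN conjunct2, THEN conjunct2, THEN conjunct2, THEN conjunct2, THEN conjunct2, THEN conjunct2, THEN conjunct2, THEN conjunct2, THEN conjunct2, THEN conjunct2, THEN conjunct2, THEN conjunct2, THEN conjunct2, THEN conjunct2] by blast

lemma nnn: "x \<in> KC \<Longrightarrow> n (n (n x)) = n x"
  using ax1[of eu x] by (simp add: unit_l eu_in n_in)

lemma tests_sub: "tests K \<subseteq> KC"
  unfolding tests_def using n_in by blast

lemma tests_nn: "u \<in> tests K \<Longrightarrow> n (n u) = u"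
  unfolding tests_def using nnn by blast

lemma n_tests: "x \<in> KC \<Longrightarrow> n x \<in> tests K"
  unfolding tests_def by blast

lemma ub_J: "A \<subseteq> KC \<Longrightarrow> u \<in> KC \<Longrightarrow> lq (J A) u \<longleftrightarrow> (\<forall>a\<in>A. lq a u)"
  by (meson J_in J_least J_upper lq_trans subsetD)

lemma J_eqI: "A \<subseteq> KC \<Longrightarrow> B \<subseteq> KC \<Longrightarrow> (\<And>u. u \<in> KC \<Longrightarrow> (\<forall>a\<in>A. lq a u) \<longleftrightarrow> (\<forall>b\<in>B. lq b u)) \<Longrightarrow> J A = J B"
  by (meson J_in lq_antisym lq_refl ub_J)

lemma J2_in: "a \<in> KC \<Longrightarrow> b \<in> KC \<Longrightarrow> J {a, b} \<in> KC" by (simp add: J_in)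

lemma J_absorb: "a \<in> KC \<Longrightarrow> b \<in> KC \<Longrightarrow> J {a, J {a, b}} = J {a, b}"
  by (rule J_eqI) (auto simp: J2_in ub_J)

lemma J_assoc: "a \<in> KC \<Longrightarrow> b \<in> KC \<Longrightarrow> c \<in> KC \<Longrightarrow> J {J {a, b}, c} = J {a, J {b, c}}"
  by (rule J_eqI) (auto simp: J2_in ub_J)

lemma ax2_2: "a \<in> KC \<Longrightarrow> b \<in> KC \<Longrightarrow> n (J {n (n a), n (n b)}) = n (J {a, b})"
  using ax2[of "{a, b}"] by simp

lemma tvee_ub1: "a \<in> tests K \<Longrightarrow> b \<in> tests K \<Longrightarrow> tle K a (tvee K {a, b})"
proof -
  assume a: "a \<in> tests K" and b: "b \<in> tests K"
  have aK: "a \<in> KC" and bK: "b \<in> KC" using a b tests_sub by auto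
  have "n (J {a, n (n (J {a, b}))}) = n (J {n (n a), n (n (J {a, b}))})"
    using a tests_nn by simp
  also have "\<dots> = n (J {a, J {a, b}})" using ax2_2 aK bK J2_in by blast
  also have "\<dots> = n (J {a, b})" using J_absorb aK bK by simp
  finally show ?thesis unfolding tle_def tvee_def by simp
qed

lemma tvee_lub: "a \<in> tests K \<Longrightarrow> b \<in> tests K \<Longrightarrow> c \<in> tests K \<Longrightarrow> tle K a c \<Longrightarrow> tle K b c \<Longrightarrow> tle K (tvee K {a, b}) c"
proof -
  assume a: "a \<in> tests K" and b: "b \<in> tests K" and c: "c \<in> tests K"
    and ac: "tle K a c" and bc: "tle K b c"
  have aK: "a \<in> KC" and bK: "b \<in> KC" and cK: "c \<in> KC" using a b c tests_sub by auto
  have ac': "n (n (J {a, c})) = c" and bc': "n (n (J {b, c})) = c"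
    using ac bc unfolding tle_def tvee_def by auto
  have "n (J {n (n (J {a, b})), c}) = n (J {n (n (J {a, b})), n (n c)})"
    using c tests_nn by simp
  also have "\<dots> = n (J {J {a, b}, c})" using ax2_2 aK bK cK J2_in by blast
  also have "\<dots> = n (J {a, J {b, c}})" using J_assoc aK bK cK by simp
  also have "\<dots> = n (J {n (n a), n (n (J {b, c}))})" using ax2_2 aK bK cK J2_in by metis
  also have "\<dots> = n (J {a, c})" using bc' a tests_nn by simp
  also have "\<dots> = n c" using ac' nnn J2_in aK cK by metis
  finally have "n (J {n (n (J {a, b})), c}) = n c" .
  then show ?thesis unfolding tle_def tvee_def using c tests_nn by simp
qed

lemma tvee_in: "a \<in> tests K \<Longrightarrow> b \<in> tests K \<Longrightarrow> tvee K {a, b} \<in> tests K"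
  unfolding tvee_def using tests_sub J2_in n_in n_tests by (meson subsetD)

lemma bullet_in: "k \<in> KC \<Longrightarrow> w \<in> KC \<Longrightarrow> bullet K k w \<in> tests K"
  unfolding bullet_def by (simp add: mm_in n_in n_tests)

end

locale sfl = idal +
  assumes sf: "complete_oml (tests_oml K)"
begin

sublocale T: coml "tests_oml K" by (rule coml.intro) (rule sf)

lemma TC[simp]: "om_carrier (tests_oml K) = tests K" and TL[simp]: "om_le (tests_oml K) = tle K"
  and TP[simp]: "om_perp (tests_oml K) = n"
  by (simp_all add: tests_oml_def)

lemma sup_tvee: "a \<in> tests K \<Longrightarrow> b \<in> tests K \<Longrightarrow> om_sup (tests_oml K) a b = tvee K {a, b}"
proof -
  assume a: "a \<in> tests K" and b: "b \<in> tests K"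
  have "tle K b (tvee K {a, b})" using tvee_ub1[of b a] a b by (simp add: insert_commute)
  then have "om_is_lub (tests_oml K) {a, b} (tvee K {a, b})"
    unfolding om_is_lub_def using tvee_ub1 tvee_lub tvee_in a b by auto
  then show ?thesis unfolding om_sup_def by (rule T.Sup_eq)
qed

lemma bullet_sasaki: "u \<in> tests K \<Longrightarrow> v \<in> tests K \<Longrightarrow> bullet K u v = sasaki (tests_oml K) u v"
proof -
  assume u: "u \<in> tests K" and v: "v \<in> tests K"
  have uK: "u \<in> KC" and vK: "v \<in> KC" using u v tests_sub by auto
  have nu: "n u \<in> tests K" using uK n_tests by blast
  have s: "tvee K {n u, v} \<in> tests K" using nu v tvee_in by blast
  have "sasaki (tests_oml K) u v = om_inf (tests_oml K) u (tvee K {n u, v})"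
    using T.sasaki_val[of v u] v nu by (simp add: sup_tvee)
  also have "\<dots> = n (tvee K {n u, n (tvee K {n u, v})})"
    using T.inf_eq[of u "tvee K {n u, v}"] u s nu T.perp_in by (simp add: sup_tvee)
  also have "\<dots> = n (J {n u, n (J {n u, v})})"
  proof -
    have j1: "J {n u, v} \<in> KC" using uK vK n_in J2_in by blast
    have j2: "J {n u, n (J {n u, v})} \<in> KC" using uK j1 n_in J2_in by blast
    show ?thesis unfolding tvee_def using nnn[OF j1] nnn[OF j2] by simp
  qed
  also have "\<dots> = n (n (mm (n (n u)) v))" using ax4 uK vK by simp
  also have "\<dots> = bullet K u v" unfolding bullet_def using u tests_nn by simp
  finally show ?thesis by simp
qed

end


context idal begin

lemma Tset_sub: "Tset K \<subseteq> KC"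
proof
  fix x assume "x \<in> Tset K"
  then show "x \<in> KC"
    by (induction rule: Tset.induct) (auto simp: n_in eu_in mm_in st_in)
qed

lemma tests_Tset: "tests K \<subseteq> Tset K"
  unfolding tests_def by (auto intro: Tset.test)

lemma Tset_submon: "is_inv_submonoid K (Tset K)"
  unfolding is_inv_submonoid_def using Tset_sub by (auto intro: Tset.intros)

lemma st_eu: "st eu = eu"
proof -
  have "eu = st (st eu)" using stst eu_in by simp
  also have "\<dots> = st (mm (st eu) eu)" using unit_r st_in eu_in by simp
  also have "\<dots> = mm (st eu) (st (st eu))" using st_mm st_in eu_in by simp
  also have "\<dots> = mm (st eu) eu" using stst eu_in by simp
  also have "\<dots> = st eu" using unit_r st_in eu_in by simp
  finally show ?thesis by simp
qed

end

lemma mor_Tset: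
  assumes "is_ida K1" "ida_mor K1 K2 f"
  shows "f ` Tset K1 \<subseteq> Tset K2"
proof
  interpret idal K1 by (rule idal.intro) (rule assms(1))
  fix y assume "y \<in> f ` Tset K1"
  then obtain x where x: "x \<in> Tset K1" and y: "y = f x" by blast
  have "f x \<in> Tset K2" using x
  proof (induction rule: Tset.induct)
    case (test k)
    then have "f (ida_neg K1 k) = ida_neg K2 (f k)" and "f k \<in> ida_carrier K2"
      using assms(2) unfolding ida_mor_def by auto
    then show ?case by (simp add: Tset.test)
  next
    case unit
    then show ?case using assms(2) unfolding ida_mor_def by (simp add: Tset.unit)
  next
    case (mult s t)
    then have "f (ida_mult K1 s t) = ida_mult K2 (f s) (f t)"
      using assms(2) Tset_sub unfolding ida_mor_def by blast
    then show ?case using mult by (simp add: Tset.mult)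
  next
    case (star s)
    then have "f (ida_star K1 s) = ida_star K2 (f s)"
      using assms(2) Tset_sub unfolding ida_mor_def by blast
    then show ?case using star by (simp add: Tset.star)
  qed
  then show "y \<in> Tset K2" using y by simp
qed

context coml begin

lemma Lin_simps[simp]:
  "ida_carrier (Lin M) = {f. is_linear M f}"
  "ida_mult (Lin M) = om_comp M"
  "ida_star (Lin M) = adjoint M"
  "ida_unit (Lin M) = (\<lambda>x\<in>C. x)"
  "ida_neg (Lin M) = (\<lambda>f. sasaki M (p (f tp)))"
  by (simp_all add: Lin_def)

lemma Pset_simps[simp]:
  "ida_carrier (Pset M L) = Pow L"
  "ida_mult (Pset M L) = (\<lambda>A B. {om_comp M a b | a b. a \<in> A \<and> b \<in> B})"
  "ida_star (Pset M L) = (\<lambda>A. adjoint M ` A)"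
  "ida_unit (Pset M L) = {(\<lambda>x\<in>C. x)}"
  "ida_neg (Pset M L) = (\<lambda>A. {sasaki M (p (om_Sup M ((\<lambda>a. a tp) ` A)))})"
  by (simp_all add: Pset_def)

lemma linear_tp: "is_linear M f \<Longrightarrow> f tp \<in> C"
  unfolding is_linear_def using top_in by auto

lemma TsetLin_linear: "f \<in> Tset (Lin M) \<Longrightarrow> is_linear M f"
proof (induction rule: Tset.induct)
  case (test k)
  then show ?case using linear_tp perp_in sasaki_linear by simp
next
  case unit
  show ?case using linear_id by (simp only: Lin_simps(4))
next
  case (mult s t)
  then show ?case using linear_comp by simp
next
  case (star s)
  then show ?case using linear_adjoint_linear by simp
qed

lemma sasaki_in_Tset: "m \<in> C \<Longrightarrow> sasaki M m \<in> Tset (Lin M)"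
proof -
  assume m: "m \<in> C"
  have "sasaki M m = ida_neg (Lin M) (sasaki M (p m))"
    using m by (simp add: sasaki_top perp_in perp_perp)
  moreover have "sasaki M (p m) \<in> ida_carrier (Lin M)"
    using m by (simp add: sasaki_linear perp_in)
  ultimately show ?thesis by (metis Tset.test)
qed

lemma fwd: "f \<in> Tset (Lin M) \<Longrightarrow> {f} \<in> Tset (Pset M (Tset (Lin M)))"
proof (induction rule: Tset.induct)
  case (test k)
  let ?m = "k tp"
  have m: "?m \<in> C" using test linear_tp by simp
  have "ida_neg (Pset M (Tset (Lin M))) {sasaki M ?m} = {ida_neg (Lin M) k}"
    using m by (simp add: sasaki_top Sup_single)
  moreover have "{sasaki M ?m} \<in> ida_carrier (Pset M (Tset (Lin M)))"
    using m sasaki_in_Tset by simp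
  ultimately show ?case by (metis Tset.test)
next
  case unit
  show ?case using Tset.unit[of "Pset M (Tset (Lin M))"] by (simp only: Lin_simps(4) Pset_simps(4))
next
  case (mult s t)
  have "ida_mult (Pset M (Tset (Lin M))) {s} {t} = {ida_mult (Lin M) s t}" by auto
  then show ?case using Tset.mult[OF mult.IH] by metis
next
  case (star s)
  have "ida_star (Pset M (Tset (Lin M))) {s} = {ida_star (Lin M) s}" by auto
  then show ?case using Tset.star[OF star.IH] by metis
qed

lemma bwd: "A \<in> Tset (Pset M (Tset (Lin M))) \<Longrightarrow> \<exists>f\<in>Tset (Lin M). A = {f}"
proof (induction rule: Tset.induct)
  case (test B)
  have "(\<lambda>a. a tp) ` B \<subseteq> C"
    using test TsetLin_linear linear_tp by auto
  then have "p (om_Sup M ((\<lambda>a. a tp) ` B)) \<in> C" using Sup_in perp_in by blast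
  then show ?case using sasaki_in_Tset by simp
next
  case unit
  show ?case using Tset.unit[of "Lin M"] by (simp only: Lin_simps(4) Pset_simps(4) bex_simps) blast
next
  case (mult s t)
  then obtain f g where f: "f \<in> Tset (Lin M)" "s = {f}" and g: "g \<in> Tset (Lin M)" "t = {g}" by blast
  have "ida_mult (Pset M (Tset (Lin M))) s t = {ida_mult (Lin M) f g}" using f g by auto
  then show ?case using Tset.mult[OF f(1) g(1)] by blast
next
  case (star s)
  then obtain f where f: "f \<in> Tset (Lin M)" "s = {f}" by blast
  have "ida_star (Pset M (Tset (Lin M))) s = {ida_star (Lin M) f}" using f by auto
  then show ?case using Tset.star[OF f(1)] by blast
qed

lemma part3: "im_iso (T_obj (Lin M)) (T_obj (Pset M (Tset (Lin M)))) (\<lambda>f. {f})"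
  unfolding im_iso_def im_hom_def T_obj_def invmon.simps
proof (intro conjI)
  show "(\<lambda>f. {f}) \<in> Tset (Lin M) \<rightarrow> Tset (Pset M (Tset (Lin M)))" using fwd by blast
  show "\<forall>x\<in>Tset (Lin M). \<forall>y\<in>Tset (Lin M). {ida_mult (Lin M) x y} = ida_mult (Pset M (Tset (Lin M))) {x} {y}"
    by auto
  show "\<forall>x\<in>Tset (Lin M). {ida_star (Lin M) x} = ida_star (Pset M (Tset (Lin M))) {x}"
    by auto
  show "{ida_unit (Lin M)} = ida_unit (Pset M (Tset (Lin M)))"
    by (simp only: Lin_simps(4) Pset_simps(4))
  show "bij_betw (\<lambda>f. {f}) (Tset (Lin M)) (Tset (Pset M (Tset (Lin M))))"
    unfolding bij_betw_def inj_on_def using fwd bwd by auto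
qed

lemma sasaki_comp: "a \<in> C \<Longrightarrow> b \<in> C \<Longrightarrow> le a b \<Longrightarrow> sasaki M a = om_comp M (sasaki M b) (sasaki M a)"
proof
  fix x assume a: "a \<in> C" and b: "b \<in> C" and ab: "le a b"
  show "sasaki M a x = om_comp M (sasaki M b) (sasaki M a) x"
  proof (cases "x \<in> C")
    case True
    have z: "sasaki M a x \<in> C" using a True sasaki_in by blast
    have "le (sasaki M a x) b" using sasaki_le[OF a True] ab le_trans z a b by blast
    then have "sasaki M b (sasaki M a x) = sasaki M a x"
      using z b by (simp add: sasaki_val om_dual)
    then show ?thesis using True by (simp add: om_comp_def)
  next
    case False
    then show ?thesis by (simp add: om_comp_def sasaki_def)
  qed
qed

end

context sfl begin

abbreviation "MT \<equiv> tests_oml K"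

lemma nu_test: "u \<in> tests K \<Longrightarrow> nu K u = sasaki MT u"
  unfolding nu_def
  by (rule ext) (simp add: bullet_sasaki sasaki_def)

lemma nu_val: "w \<in> tests K \<Longrightarrow> nu K s w = bullet K s w"
  unfolding nu_def by simp

lemma nu_ext: "s \<in> KC \<Longrightarrow> nu K s \<in> tests K \<rightarrow>\<^sub>E tests K"
  unfolding nu_def using bullet_in tests_sub by auto

lemma nu_ext': "s \<in> KC \<Longrightarrow> nu K s \<in> om_carrier MT \<rightarrow>\<^sub>E om_carrier MT"
  using nu_ext by simp

lemma nu_mult: "s \<in> KC \<Longrightarrow> t \<in> KC \<Longrightarrow> nu K (mm s t) = om_comp MT (nu K s) (nu K t)"
proof
  fix x assume s: "s \<in> KC" and t: "t \<in> KC"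
  show "nu K (mm s t) x = om_comp MT (nu K s) (nu K t) x"
  proof (cases "x \<in> tests K")
    case True
    have xK: "x \<in> KC" using True tests_sub by blast
    have "nu K s (nu K t x) = bullet K s (bullet K t x)"
      using True nu_val bullet_in t xK by simp
    also have "\<dots> = n (n (mm s (mm t x)))"
      unfolding bullet_def using ax1 s t xK mm_in by simp
    also have "\<dots> = bullet K (mm s t) x" unfolding bullet_def using assoc s t xK by simp
    finally show ?thesis using True by (simp add: om_comp_def nu_val)
  next
    case False
    then show ?thesis by (simp add: om_comp_def nu_def)
  qed
qed

lemma nu_unit: "nu K eu = (\<lambda>x\<in>tests K. x)"
  unfolding nu_def bullet_def
  by (rule restrict_ext) (metis tests_sub subsetD unit_l tests_nn)

lemma nu_adj: "s \<in> Tset K \<Longrightarrow> is_adjoint MT (nu K s) (nu K (st s))"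
proof (induction rule: Tset.induct)
  case (test k)
  have "n k \<in> tests K" using test n_tests by blast
  then show ?case using T.sasaki_adj[of "n k"] ax3[OF test] nu_test by simp
next
  case unit
  show ?case using T.id_adj by (simp only: st_eu nu_unit TC)
next
  case (mult s t)
  have sK: "s \<in> KC" and tK: "t \<in> KC" using mult Tset_sub by auto
  show ?case
    using T.adj_comp[OF nu_ext'[OF sK] nu_ext'[OF tK] mult.IH]
    by (simp add: st_mm sK tK nu_mult st_in)
next
  case (star s)
  have sK: "s \<in> KC" using star Tset_sub by auto
  show ?case using T.adj_sym[OF nu_ext'[OF sK] star.IH] stst sK by simp
qed

lemma nu_star: "s \<in> Tset K \<Longrightarrow> nu K (st s) = adjoint MT (nu K s)"
  using nu_adj T.adjoint_eq by metis

lemma nu_into: "s \<in> Tset K \<Longrightarrow> nu K s \<in> Tset (Lin MT)"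
proof (induction rule: Tset.induct)
  case (test k)
  have "n k \<in> tests K" using test n_tests by blast
  then show ?case using nu_test T.sasaki_in_Tset by simp
next
  case unit
  show ?case using Tset.unit[of "Lin MT"] by (simp only: nu_unit T.Lin_simps(4) TC)
next
  case (mult s t)
  have sK: "s \<in> KC" and tK: "t \<in> KC" using mult Tset_sub by auto
  show ?case using Tset.mult[OF mult.IH] nu_mult[OF sK tK] by simp
next
  case (star s)
  show ?case using Tset.star[OF star.IH] nu_star[OF star.hyps] by simp
qed

lemma nu_onto: "g \<in> Tset (Lin MT) \<Longrightarrow> \<exists>s\<in>Tset K. g = nu K s"
proof (induction rule: Tset.induct)
  case (test k)
  have "k (om_top MT) \<in> tests K" using test T.linear_tp by simp
  then have kK: "k (om_top MT) \<in> KC" using tests_sub by blast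
  then have "n (k (om_top MT)) \<in> Tset K" by (rule Tset.test)
  moreover have "ida_neg (Lin MT) k = nu K (n (k (om_top MT)))"
    using nu_test n_tests kK by simp
  ultimately show ?case by blast
next
  case unit
  have "ida_unit (Lin MT) = nu K eu" by (simp only: nu_unit T.Lin_simps(4) TC)
  then show ?case using Tset.unit[of K] by blast
next
  case (mult s t)
  then obtain a b where a: "a \<in> Tset K" "s = nu K a" and b: "b \<in> Tset K" "t = nu K b" by blast
  have "a \<in> KC" "b \<in> KC" using a b Tset_sub by auto
  then have "ida_mult (Lin MT) s t = nu K (mm a b)" using a b nu_mult by simp
  then show ?case using Tset.mult[OF a(1) b(1)] by blast
next
  case (star s)
  then obtain a where a: "a \<in> Tset K" "s = nu K a" by blast
  have "ida_star (Lin MT) s = nu K (st a)" using a nu_star by simp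
  then show ?case using Tset.star[OF a(1)] by blast
qed

lemma part2:
  assumes eq: "\<forall>s\<in>Tset K. \<forall>t\<in>Tset K. s = t \<longleftrightarrow> ida_equiv K s t"
  shows "im_iso (T_obj K) (T_obj (Lin (tests_oml K))) (nu K) \<and>
       bij_betw (nu K) (tests K) {sasaki (tests_oml K) u | u. u \<in> tests K} \<and>
       (\<forall>x\<in>tests K. \<forall>y\<in>tests K. tle K x y \<longrightarrow>
          nu K x = om_comp (tests_oml K) (nu K y) (nu K x))"
proof -
  have inj: "inj_on (nu K) (Tset K)"
  proof (rule inj_onI)
    fix s t assume s: "s \<in> Tset K" and t: "t \<in> Tset K" and h: "nu K s = nu K t"
    have "ida_equiv K s t" unfolding ida_equiv_def
    proof
      fix w assume "w \<in> tests K"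
      then show "bullet K s w = bullet K t w" using h nu_val by metis
    qed
    then show "s = t" using eq s t by blast
  qed
  have img: "nu K ` Tset K = Tset (Lin MT)" using nu_into nu_onto by blast
  have iso: "im_iso (T_obj K) (T_obj (Lin (tests_oml K))) (nu K)"
    unfolding im_iso_def im_hom_def T_obj_def
    using inj img nu_into nu_mult nu_star nu_unit Tset_sub
    by (auto simp: bij_betw_def subsetD)
  have bij: "bij_betw (nu K) (tests K) {sasaki (tests_oml K) u | u. u \<in> tests K}"
    unfolding bij_betw_def
  proof
    show "inj_on (nu K) (tests K)" using inj tests_Tset inj_on_subset by blast
    show "nu K ` tests K = {sasaki MT u |u. u \<in> tests K}" using nu_test by auto
  qed
  have ord: "\<forall>x\<in>tests K. \<forall>y\<in>tests K. tle K x y \<longrightarrow> nu K x = om_comp MT (nu K y) (nu K x)"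
    using T.sasaki_comp nu_test by simp
  show ?thesis using iso bij ord by blast
qed

end

theorem proposition4p9:
  shows
  "(\<forall>K :: 'a ida. is_ida K \<longrightarrow>
       tests K \<subseteq> Tset K \<and> Tset K \<subseteq> ida_carrier K \<and> is_inv_submonoid K (Tset K))
   \<and>
   (\<forall>K :: 'b ida. semi_foulis K \<and>
       (\<forall>s\<in>Tset K. \<forall>t\<in>Tset K. s = t \<longleftrightarrow> ida_equiv K s t) \<longrightarrow>
       im_iso (T_obj K) (T_obj (Lin (tests_oml K))) (nu K) \<and>
       bij_betw (nu K) (tests K) {sasaki (tests_oml K) u | u. u \<in> tests K} \<and>
       (\<forall>x\<in>tests K. \<forall>y\<in>tests K. tle K x y \<longrightarrow>
          nu K x = om_comp (tests_oml K) (nu K y) (nu K x)))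
   \<and>
   (\<forall>M :: 'c oml. complete_oml M \<longrightarrow>
       im_iso (T_obj (Lin M)) (T_obj (Pset M (Tset (Lin M)))) (\<lambda>f. {f}))
   \<and>
   (\<forall>(K1 :: 'd ida) (K2 :: 'e ida) f. is_ida K1 \<and> is_ida K2 \<and> ida_mor K1 K2 f \<longrightarrow>
       f ` Tset K1 \<subseteq> Tset K2 \<and> T_mor K1 f = restrict f (Tset K1))"
proof (intro conjI allI impI)
  fix K :: "'a ida" assume "is_ida K"
  then interpret idal K by (rule idal.intro)
  show "tests K \<subseteq> Tset K" by (rule tests_Tset)
  show "Tset K \<subseteq> ida_carrier K" by (rule Tset_sub)
  show "is_inv_submonoid K (Tset K)" by (rule Tset_submon)
next
  fix K :: "'b ida"
  assume h: "semi_foulis K \<and> (\<forall>s\<in>Tset K. \<forall>t\<in>Tset K. s = t \<longleftrightarrow> ida_equiv K s t)"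
  then interpret sfl K
    unfolding semi_foulis_def by (intro sfl.intro idal.intro sfl_axioms.intro) auto
  have p: "im_iso (T_obj K) (T_obj (Lin (tests_oml K))) (nu K) \<and>
       bij_betw (nu K) (tests K) {sasaki (tests_oml K) u | u. u \<in> tests K} \<and>
       (\<forall>x\<in>tests K. \<forall>y\<in>tests K. tle K x y \<longrightarrow>
          nu K x = om_comp (tests_oml K) (nu K y) (nu K x))"
    using part2 h by blast
  then show "im_iso (T_obj K) (T_obj (Lin (tests_oml K))) (nu K)" by blast
  show "bij_betw (nu K) (tests K) {sasaki (tests_oml K) u | u. u \<in> tests K}" using p by blast
  show "\<forall>x\<in>tests K. \<forall>y\<in>tests K. tle K x y \<longrightarrow>
          nu K x = om_comp (tests_oml K) (nu K y) (nu K x)" using p by blast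
next
  fix M :: "'c oml" assume "complete_oml M"
  then interpret coml M by (rule coml.intro)
  show "im_iso (T_obj (Lin M)) (T_obj (Pset M (Tset (Lin M)))) (\<lambda>f. {f})" by (rule part3)
next
  fix K1 :: "'d ida" and K2 :: "'e ida" and f
  assume h: "is_ida K1 \<and> is_ida K2 \<and> ida_mor K1 K2 f"
  show "f ` Tset K1 \<subseteq> Tset K2" using mor_Tset h by blast
  show "T_mor K1 f = restrict f (Tset K1)" by (simp add: T_mor_def)
qed

end
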